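(* $\mathcal{A}_h^{2h}$ is the operator adjoint of $\mathcal{I}_{2h}^{h}$ and is proportional to the left inverse of $\mathcal{I}_{2h}^{h}$: for any $\bm v_h\in\mathbb{R}^{|S_h|}$ and $\bm v_{2h}\in\mathbb{R}^{|S_{2h}|}$, \[ \big(\bm v_h, \mathcal{I}_{2h}^{h}\bm v_{2h}\big)=\big(\mathcal{A}_h^{2h}\bm v_h, \bm v_{2h}\big),\qquad \mathcal{A}_h^{2h}\mathcal{I}_{2h}^{h}\bm v_{2h}=2^d\,\bm v_{2h}, \] where the parentheses denote standard inner products. Furthermore, the stochastic matrices at consecutive levels satisfy \[ P_{2h}=\mathcal{A}_h^{2h}\,P_h\,\mathcal{I}_{2h}^{h}. \]
   Context: Partition $\mathcal{D}=[-1,1]^d$ with uniform spacing $h=1/N$ into bins $\mathcal{D}_{\bm j}(h)=\bigotimes_{k=1}^d[j_kh,(j_k+1)h)$, $\bm j\in N(h)=\{\bm j:-N\le j_k<N\ \forall k\}$, giving a finite state space $S_h$ with $|S_h|=(2/h)^d$; each bin of level $2h$ is the union of $2^d$ bins of level $h$. For a transition density $K(x,y)$ on $\mathbb{R}^d$, the Ulam–Galerkin matrix at level $h$ is $P_h(\bm i,\bm j)=\int_{\mathcal{D}_{\bm i}(h)}\int_{\mathcal{D}_{\bm j}(h)}K(x,y)\,dy\,dx$. The averaging operator $\mathcal{A}_h^{2h}$ maps a vector on level $h$ to level $2h$ by summing the entries of the $2^d$ fine bins contained in each coarse bin; the interpolation operator $\mathcal{I}_{2h}^{h}$ maps a vector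 on level $2h$ to level $h$ by assigning each fine bin the value of the coarse bin containing it. *)

theory Defs
  imports "HOL-Analysis.Analysis"
begin

text \<open>Level with N bins per unit length, i.e. spacing h = 1/N, on D = [-1,1]^d.
  The dimension d is CARD('d); multi-indices are elements of int^'d.\<close>

definition idx_set :: "nat \<Rightarrow> (int^'d::finite) set" where
  "idx_set N = {j. \<forall>k. - int N \<le> j$k \<and> j$k < int N}"

definition bin :: "nat \<Rightarrow> int^'d::finite \<Rightarrow> (real^'d) set" where
  "bin N j = {x. \<forall>k. real_of_int (j$k) * (1 / real N) \<le> x$k
                    \<and> x$k < real_of_int (j$k + 1) * (1 / real N)}"

definition ulam :: "(real^'d \<Rightarrow> real^'d \<Rightarrow> real) \<Rightarrow> nat \<Rightarrow> int^'d::finite \<Rightarrow> int^'d \<Rightarrow> real" where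
  "ulam K N i j = (LINT x:bin N i|lborel. (LINT y:bin N j|lborel. K x y))"

definition transition_density :: "(real^'d::finite \<Rightarrow> real^'d \<Rightarrow> real) \<Rightarrow> bool" where
  "transition_density K \<longleftrightarrow>
     case_prod K \<in> borel_measurable (lborel \<Otimes>\<^sub>M lborel) \<and>
     (\<forall>x y. 0 \<le> K x y) \<and>
     (\<forall>x. integrable lborel (K x) \<and> (LINT y|lborel. K x y) = 1)"

text \<open>Fine level: N = 2M bins per unit (spacing h); coarse level: M (spacing 2h).\<close>
definition avg :: "nat \<Rightarrow> (int^'d::finite \<Rightarrow> real) \<Rightarrow> int^'d \<Rightarrow> real" where
  "avg M v J = (\<Sum>j\<in>{j\<in>idx_set (2*M). bin (2*M) j \<subseteq> bin M J}. v j)"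

definition interp :: "nat \<Rightarrow> (int^'d::finite \<Rightarrow> real) \<Rightarrow> int^'d \<Rightarrow> real" where
  "interp M w j = (\<Sum>J\<in>{J\<in>idx_set M. bin (2*M) j \<subseteq> bin M J}. w J)"

definition avg_mat :: "nat \<Rightarrow> int^'d::finite \<Rightarrow> int^'d \<Rightarrow> real" where
  "avg_mat M J i = (if bin (2*M) i \<subseteq> bin M J then 1 else 0)"

definition interp_mat :: "nat \<Rightarrow> int^'d::finite \<Rightarrow> int^'d \<Rightarrow> real" where
  "interp_mat M i J = (if bin (2*M) i \<subseteq> bin M J then 1 else 0)"

definition inner_on :: "'a set \<Rightarrow> ('a \<Rightarrow> real) \<Rightarrow> ('a \<Rightarrow> real) \<Rightarrow> real" where
  "inner_on S v w = (\<Sum>j\<in>S. v j * w j)"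

end

theory Submission
  imports Defs
begin


lemma bin_floor:
  assumes "N > 0"
  shows "x \<in> bin N j \<longleftrightarrow> (\<forall>k. \<lfloor>x$k * real N\<rfloor> = j$k)"
proof -
  have "\<And>k. (real_of_int (j$k) * (1 / real N) \<le> x$k \<and> x$k < real_of_int (j$k + 1) * (1 / real N))
      \<longleftrightarrow> \<lfloor>x$k * real N\<rfloor> = j$k"
    using assms by (simp add: floor_eq_iff field_simps)
  then show ?thesis by (simp add: bin_def)
qed

lemma bin_sets: "bin N j \<in> sets lborel"
  unfolding bin_def by measurable

lemma bin_bounded: "bounded (bin N j)"
proof -
  have "bin N j \<subseteq> cbox (\<chi> k. real_of_int (j$k) * (1 / real N)) (\<chi> k. real_of_int (j$k + 1) * (1 / real N))"
    by (auto simp: bin_def mem_box_cart less_imp_le)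
  then show ?thesis using bounded_cbox bounded_subset by blast
qed

lemma finite_idx: "finite (idx_set N :: (int^'d::finite) set)"
proof -
  have "vec_nth ` (idx_set N :: (int^'d) set) \<subseteq> PiE UNIV (\<lambda>_. {- int N..<int N})"
    by (auto simp: idx_set_def PiE_def extensional_def)
  then have "finite (vec_nth ` (idx_set N :: (int^'d) set))"
    by (rule finite_subset) (intro finite_PiE, auto)
  then show ?thesis
    by (rule finite_imageD) (simp add: inj_on_def vec_eq_iff)
qed

lemma floor_half: "\<lfloor>y\<rfloor> div 2 = \<lfloor>(y::real) / 2\<rfloor>"
proof -
  have "\<lfloor>y / 2\<rfloor> = \<lfloor>real_of_int \<lfloor>y\<rfloor> / real_of_int 2\<rfloor>"
    by (metis floor_divide_real_eq_div floor_of_int of_int_numeral zero_le_numeral) 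
  then show ?thesis using floor_divide_of_int_eq[of "\<lfloor>y\<rfloor>" 2, where 'a=real] by simp
qed


lemma sub_iff:
  assumes "M > 0"
  shows "bin (2*M) i \<subseteq> bin M J \<longleftrightarrow> (\<forall>k. i$k div 2 = J$k)"
proof
  assume H: "bin (2*M) i \<subseteq> bin M J"
  define x :: "real^_" where "x = (\<chi> k. real_of_int (i$k) / real (2*M))"
  have "x \<in> bin (2*M) i" using assms by (simp add: bin_floor x_def)
  then have "x \<in> bin M J" using H by blast
  then have "\<And>k. \<lfloor>x$k * real M\<rfloor> = J$k" using assms bin_floor by blast
  moreover have "\<And>k. x$k * real M = real_of_int (i$k) / 2" using assms by (simp add: x_def)
  ultimately show "\<forall>k. i$k div 2 = J$k"
    by (metis floor_divide_of_int_eq of_int_numeral)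
next
  assume H: "\<forall>k. i$k div 2 = J$k"
  show "bin (2*M) i \<subseteq> bin M J"
  proof
    fix x assume "x \<in> bin (2*M) i"
    then have "\<And>k. \<lfloor>x$k * real (2*M)\<rfloor> = i$k" using assms bin_floor[of "2*M"] by auto
    then have "\<And>k. \<lfloor>x$k * real M\<rfloor> = J$k"
      using H floor_half[of "x$_ * real (2*M)"] by (simp add: mult.assoc)
    then show "x \<in> bin M J" using assms bin_floor by blast
  qed
qed

lemma idx_child:
  assumes "J \<in> idx_set M" "\<forall>k. i$k div 2 = J$k"
  shows "i \<in> idx_set (2*M)"
  unfolding idx_set_def
proof (safe)
  fix k
  have a: "- int M \<le> J$k" "J$k < int M" "i$k div 2 = J$k" using assms by (auto simp: idx_set_def)
  have b: "i$k = 2*J$k + i$k mod 2" "0 \<le> i$k mod 2" "i$k mod 2 < 2"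
    using a(3) by (metis div_mult_mod_eq mult.commute add.commute, simp, simp)
  from a(1,2) b show "- int (2*M) \<le> i$k" by simp
  from a(1,2) b show "i$k < int (2*M)" by simp
qed

lemma card_children:
  "card {i :: int^'d::finite. \<forall>k. i$k div 2 = J$k} = 2 ^ CARD('d)"
proof -
  have eq: "{i :: int^'d. \<forall>k. i$k div 2 = J$k} = (\<lambda>f. \<chi> k. 2*J$k + f k) ` PiE UNIV (\<lambda>_. {0,1})"
  proof (rule set_eqI, rule iffI)
    fix i :: "int^'d" assume "i \<in> {i. \<forall>k. i$k div 2 = J$k}"
    then have h: "\<And>k. i$k div 2 = J$k" by simp
    define f where "f = (\<lambda>k. i$k mod 2)"
    have "f \<in> PiE UNIV (\<lambda>_. {0,1})" unfolding f_def PiE_def extensional_def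
      by auto
    moreover have "i = (\<chi> k. 2*J$k + f k)"
    proof -
      have "\<And>k. i$k = 2*J$k + i$k mod 2" using h by (metis div_mult_mod_eq mult.commute)
      then show ?thesis by (simp add: vec_eq_iff f_def)
    qed
    ultimately show "i \<in> (\<lambda>f. \<chi> k. 2*J$k + f k) ` PiE UNIV (\<lambda>_. {0,1})" by blast
  next
    fix i :: "int^'d" assume "i \<in> (\<lambda>f. \<chi> k. 2*J$k + f k) ` PiE UNIV (\<lambda>_. {0,1})"
    then obtain f where f: "f \<in> PiE UNIV (\<lambda>_. {0,1})" "i = (\<chi> k. 2*J$k + f k)" by blast
    have "f k div 2 = 0" for k
    proof -
      have "f k \<in> {0,1}" using f(1) by auto
      then show ?thesis by auto
    qed
    then show "i \<in> {i. \<forall>k. i$k div 2 = J$k}" using f(2) by simp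
  qed
  have inj: "inj_on (\<lambda>f. \<chi> k. 2*J$k + f k) (PiE UNIV (\<lambda>_. {0::int,1}))"
  proof (rule inj_onI)
    fix f g :: "'d \<Rightarrow> int" assume "(\<chi> k. 2*J$k + f k) = (\<chi> k. 2*J$k + g k)"
    then have "\<And>k. f k = g k" by (simp add: vec_eq_iff)
    then show "f = g" by blast
  qed
  have "card {i :: int^'d. \<forall>k. i$k div 2 = J$k} = card (PiE UNIV (\<lambda>_::'d. {0::int,1}))"
    unfolding eq by (rule card_image[OF inj])
  also have "\<dots> = 2 ^ CARD('d)" by (simp add: card_PiE numeral_2_eq_2)
  finally show ?thesis .
qed


lemma children_eq:
  assumes "M > 0" "J \<in> idx_set M"
  shows "{i\<in>idx_set (2*M). bin (2*M) i \<subseteq> bin M J} = {i. \<forall>k. i$k div 2 = J$k}"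
  using sub_iff[OF assms(1)] idx_child[OF assms(2)] by blast

lemma parent_eq:
  assumes "M > 0" "J \<in> idx_set M" "\<forall>k. i$k div 2 = J$k"
  shows "{J'\<in>idx_set M. bin (2*M) i \<subseteq> bin M J'} = {J}"
  using sub_iff[OF assms(1)] assms(2,3) by (auto simp: vec_eq_iff)

lemma part1:
  "inner_on (idx_set (2*M)) v (interp M v2) = inner_on (idx_set M) (avg M v) v2"
proof -
  have "inner_on (idx_set (2*M)) v (interp M v2)
     = (\<Sum>i\<in>idx_set (2*M). \<Sum>J\<in>idx_set M. if bin (2*M) i \<subseteq> bin M J then v i * v2 J else 0)"
    unfolding inner_on_def interp_def
    by (simp add: sum.inter_filter[OF finite_idx] sum_distrib_left if_distrib cong: if_cong)
  also have "\<dots> = (\<Sum>J\<in>idx_set M. \<Sum>i\<in>idx_set (2*M). if bin (2*M) i \<subseteq> bin M J then v i * v2 J else 0)"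
    by (rule sum.swap)
  also have "\<dots> = inner_on (idx_set M) (avg M v) v2"
    unfolding inner_on_def avg_def
    by (simp add: sum.inter_filter[OF finite_idx] sum_distrib_right) (auto intro!: sum.cong)
  finally show ?thesis .
qed

lemma part2:
  assumes "M > 0" "J \<in> idx_set M"
  shows "avg M (interp M v2) J = 2 ^ CARD('d) * v2 (J :: int^'d::finite)"
proof -
  have "avg M (interp M v2) J = (\<Sum>i\<in>{i. \<forall>k. i$k div 2 = J$k}. interp M v2 i)"
    unfolding avg_def children_eq[OF assms] ..
  also have "\<dots> = (\<Sum>i\<in>{i::int^'d. \<forall>k. i$k div 2 = J$k}. v2 J)"
    by (rule sum.cong) (auto simp: interp_def parent_eq[OF assms])
  also have "\<dots> = 2 ^ CARD('d) * v2 J" by (simp add: card_children)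
  finally show ?thesis .
qed

lemma ind_split:
  fixes x :: "real^'d::finite"
  assumes "M > 0" "I \<in> idx_set M"
  shows "indicator (bin M I) x = (\<Sum>i\<in>{i\<in>idx_set (2*M). bin (2*M) i \<subseteq> bin M I}. indicator (bin (2*M) i) x :: real)"
proof -
  define i0 :: "int^'d" where "i0 = (\<chi> k. \<lfloor>x$k * real (2*M)\<rfloor>)"
  have m: "x \<in> bin (2*M) i \<longleftrightarrow> i = i0" for i
    using assms(1) by (simp add: bin_floor i0_def vec_eq_iff eq_commute)
  have "(\<Sum>i\<in>{i. \<forall>k. i$k div 2 = I$k}. indicator (bin (2*M) i) x :: real)
      = (\<Sum>i\<in>{i. \<forall>k. i$k div 2 = I$k}. if i0 = i then 1 else 0)"
    by (rule sum.cong) (auto simp: m indicator_def)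
  also have "\<dots> = (if i0 \<in> {i. \<forall>k. i$k div 2 = I$k} then 1 else 0)"
  proof -
    have "finite {i\<in>idx_set (2*M). bin (2*M) i \<subseteq> bin M I}"
      by (rule finite_subset[OF _ finite_idx]) auto
    then have "finite {i::int^'d. \<forall>k. i$k div 2 = I$k}" unfolding children_eq[OF assms] .
    then show ?thesis by (simp add: sum.delta)
  qed
  also have "\<dots> = indicator (bin M I) x"
  proof -
    have "(\<forall>k. i0$k div 2 = I$k) \<longleftrightarrow> x \<in> bin M I"
      using assms(1) floor_half[of "x$_ * real (2*M)"] by (simp add: i0_def bin_floor mult.assoc)
    then show ?thesis by (simp add: indicator_def)
  qed
  finally show ?thesis unfolding children_eq[OF assms] by simp
qed

lemma split_int:
  fixes f :: "real^'d::finite \<Rightarrow> real"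
  assumes "M > 0" "I \<in> idx_set M"
    and "\<And>i. i \<in> {i\<in>idx_set (2*M). bin (2*M) i \<subseteq> bin M I} \<Longrightarrow> integrable lborel (\<lambda>x. indicator (bin (2*M) i) x *\<^sub>R f x)"
  shows "(LINT x:bin M I|lborel. f x) = (\<Sum>i\<in>{i\<in>idx_set (2*M). bin (2*M) i \<subseteq> bin M I}. LINT x:bin (2*M) i|lborel. f x)"
proof -
  have "(LINT x:bin M I|lborel. f x) = (\<integral>x. (\<Sum>i\<in>{i\<in>idx_set (2*M). bin (2*M) i \<subseteq> bin M I}. indicator (bin (2*M) i) x *\<^sub>R f x) \<partial>lborel)"
    unfolding set_lebesgue_integral_def ind_split[OF assms(1,2)] scaleR_sum_left ..
  also have "\<dots> = (\<Sum>i\<in>{i\<in>idx_set (2*M). bin (2*M) i \<subseteq> bin M I}. LINT x:bin (2*M) i|lborel. f x)"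
  proof -
    define S where "S = {i\<in>idx_set (2*M). bin (2*M) i \<subseteq> bin M I}"
    define g where "g = (\<lambda>i x. indicator (bin (2*M) i) x *\<^sub>R f x)"
    have "integral\<^sup>L lborel (\<lambda>x. \<Sum>i\<in>S. g i x) = (\<Sum>i\<in>S. integral\<^sup>L lborel (g i))"
      by (rule Bochner_Integration.integral_sum) (use assms(3) in \<open>auto simp: S_def g_def\<close>)
    then show ?thesis unfolding set_lebesgue_integral_def S_def g_def .
  qed
  finally show ?thesis .
qed

lemma K_meas:
  assumes "transition_density K"
  shows "(\<lambda>x. LINT y:bin N j|lborel. K x y) \<in> borel_measurable lborel"
proof -
  have [measurable]: "case_prod K \<in> borel_measurable (lborel \<Otimes>\<^sub>M lborel)"
    using assms by (simp add: transition_density_def)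
  have [measurable]: "bin N j \<in> sets lborel" by (rule bin_sets)
  show ?thesis unfolding set_lebesgue_integral_def by measurable
qed

lemma K_bound:
  assumes "transition_density K"
  shows "0 \<le> (LINT y:bin N j|lborel. K x y) \<and> (LINT y:bin N j|lborel. K x y) \<le> 1"
proof -
  have i: "integrable lborel (K x)" and one: "(LINT y|lborel. K x y) = 1" and nn: "\<And>y. 0 \<le> K x y"
    using assms by (auto simp: transition_density_def)
  have i2: "integrable lborel (\<lambda>y. indicator (bin N j) y *\<^sub>R K x y)"
    by (rule integrable_mult_indicator[OF bin_sets i])
  have "0 \<le> (LINT y:bin N j|lborel. K x y)"
    unfolding set_lebesgue_integral_def by (rule integral_nonneg_AE) (simp add: nn indicator_def)
  moreover have "(LINT y:bin N j|lborel. K x y) \<le> (LINT y|lborel. K x y)"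
    unfolding set_lebesgue_integral_def
    by (rule integral_mono[OF i2 i]) (simp add: nn indicator_def)
  ultimately show ?thesis using one by simp
qed

lemma K_int:
  assumes "transition_density K"
  shows "integrable lborel (\<lambda>x. indicator (bin N' i) x *\<^sub>R (LINT y:bin N j|lborel. K x y))"
  by (rule integrableI_bounded_set_indicator[where B=1])
     (use bin_sets K_meas[OF assms] emeasure_bounded_finite[OF bin_bounded] K_bound[OF assms] in auto)


lemma set_int_sum:
  fixes f :: "'i \<Rightarrow> real^'d::finite \<Rightarrow> real"
  assumes "\<And>j. j \<in> S \<Longrightarrow> integrable lborel (\<lambda>x. indicator A x *\<^sub>R f j x)"
  shows "(LINT x:A|lborel. (\<Sum>j\<in>S. f j x)) = (\<Sum>j\<in>S. LINT x:A|lborel. f j x)"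
proof -
  define g where "g = (\<lambda>j x. indicator A x *\<^sub>R f j x)"
  have "integral\<^sup>L lborel (\<lambda>x. \<Sum>j\<in>S. g j x) = (\<Sum>j\<in>S. integral\<^sup>L lborel (g j))"
    by (rule Bochner_Integration.integral_sum) (use assms in \<open>auto simp: g_def\<close>)
  then show ?thesis unfolding set_lebesgue_integral_def g_def scaleR_sum_right .
qed

lemma part3:
  assumes "M > 0" "transition_density K" "I \<in> idx_set M" "J \<in> idx_set M"
  shows "ulam K M I J = (\<Sum>i\<in>idx_set (2*M). \<Sum>j\<in>idx_set (2*M).
                               avg_mat M I i * ulam K (2*M) i j * interp_mat M j J)"
proof -
  define CI where "CI = {i\<in>idx_set (2*M). bin (2*M) i \<subseteq> bin M I}"
  define CJ where "CJ = {j\<in>idx_set (2*M). bin (2*M) j \<subseteq> bin M J}"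
  have inner: "\<And>x. (LINT y:bin M J|lborel. K x y) = (\<Sum>j\<in>CJ. LINT y:bin (2*M) j|lborel. K x y)"
    unfolding CJ_def
    by (rule split_int[OF assms(1,4)], rule integrable_mult_indicator[OF bin_sets])
       (use assms(2) in \<open>simp add: transition_density_def\<close>)
  have "ulam K M I J = (\<Sum>i\<in>CI. LINT x:bin (2*M) i|lborel. (LINT y:bin M J|lborel. K x y))"
    unfolding ulam_def CI_def by (rule split_int[OF assms(1,3)]) (rule K_int[OF assms(2)])
  also have "\<dots> = (\<Sum>i\<in>CI. \<Sum>j\<in>CJ. ulam K (2*M) i j)"
  proof (rule sum.cong[OF refl])
    fix i assume "i \<in> CI"
    have "(LINT x:bin (2*M) i|lborel. LINT y:bin M J|lborel. K x y)
        = (LINT x:bin (2*M) i|lborel. (\<Sum>j\<in>CJ. LINT y:bin (2*M) j|lborel. K x y))"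
      by (simp only: inner)
    also have "\<dots> = (\<Sum>j\<in>CJ. LINT x:bin (2*M) i|lborel. LINT y:bin (2*M) j|lborel. K x y)"
      by (rule set_int_sum) (rule K_int[OF assms(2)])
    finally show "(LINT x:bin (2*M) i|lborel. LINT y:bin M J|lborel. K x y) = (\<Sum>j\<in>CJ. ulam K (2*M) i j)"
      by (simp add: ulam_def)
  qed
  also have "\<dots> = (\<Sum>i\<in>idx_set (2*M). \<Sum>j\<in>idx_set (2*M).
                               avg_mat M I i * ulam K (2*M) i j * interp_mat M j J)"
    unfolding avg_mat_def interp_mat_def CI_def CJ_def
    by (simp add: sum.inter_filter[OF finite_idx]) (auto intro!: sum.cong)
  finally show ?thesis .
qed


theorem lemma2:
  fixes K :: "real^'d::finite \<Rightarrow> real^'d \<Rightarrow> real" and M :: nat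
    and v v2 :: "int^'d \<Rightarrow> real"
  assumes "M \<ge> 1" and "transition_density K"
  shows "(inner_on (idx_set (2*M)) v (interp M v2) = inner_on (idx_set M) (avg M v) v2)
       \<and> (\<forall>J\<in>idx_set M. avg M (interp M v2) J = 2 ^ CARD('d) * v2 J)
       \<and> (\<forall>I\<in>idx_set M. \<forall>J\<in>idx_set M.
            ulam K M I J = (\<Sum>i\<in>idx_set (2*M). \<Sum>j\<in>idx_set (2*M).
                               avg_mat M I i * ulam K (2*M) i j * interp_mat M j J))"
proof -
  have M: "M > 0" using assms(1) by simp
  show ?thesis using part1 part2[OF M] part3[OF M assms(2)] by blast
qed

end
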